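(* Let $S=(\mathbb{R}\cup\{-\infty\},\max,+,-\infty,0)$ be the max-plus semiring, let $A\in M_{n}(S)$, let $b\in S^{n}$ be a regular vector, and suppose $d:=\det_{\varepsilon}(A)\neq-\infty$. For $j\in\{1,\dots,n\}$ let $A_{[j]}$ be the matrix obtained from $A$ by replacing its $j$-th column by $b$, and $d_j:=\det_{\varepsilon}(A_{[j]})$. Then the system $AX=b$ has the maximal solution $X^{*}=(d_1-d,\,d_2-d,\,\dots,\,d_n-d)^{T}$ if and only if $(AA^{-})_{ij}\le b_i-b_j$ for all $i,j\in\{1,\dots,n\}$.
   Context: Matrix operations over $S$: $(A+B)_{ij}=\max(a_{ij},b_{ij})$, $(AC)_{ij}=\max_k(a_{ik}+c_{kj})$. The $\varepsilon$-determinant (with the identity $\varepsilon$-function) of $A\in M_n(S)$ is $\det_{\varepsilon}(A)=\max_{\sigma\in\mathcal{S}_n}\sum_{i=1}^{n}a_{i\sigma(i)}$. $A(i|j)$ denotes the submatrix obtained by deleting row $i$ and column $j$, and the $\varepsilon$-adjoint is $\mathrm{adj}_{\varepsilon}(A)_{ij}=\det_{\varepsilon}(A(j|i))$. When $\det_{\varepsilon}(A)\neq-\infty$ (a unit of $S$), the pseudo-inverse is $A^{-}=(a^{-}_{ij})$ with $a^{-}_{ij}=\mathrm{adj}_{\varepsilon}(A)_{ij}-\det_{\varepsilon}(A)$. A vector is regular if none of its entries is $-\infty$. Differences such as $d_j-d$ and $b_i-b_j$ are ordinary real subtraction (in the semifield, $d^{-1}d_j$). A solution $X^{*}$ of $AX=b$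 is maximal if $X\le X^{*}$ componentwise for every solution $X$. *)

theory Defs
  imports "HOL-Combinatorics.Permutations" "HOL-Library.Extended_Real"
begin

text \<open>Max-plus semiring S = R \<union> {-\<infinity>} is represented inside ereal (entries never \<infinity>).
  n x n matrices are functions nat \<Rightarrow> nat \<Rightarrow> ereal with indices in {0..<n}.\<close>

definition mp_det :: "nat \<Rightarrow> (nat \<Rightarrow> nat \<Rightarrow> ereal) \<Rightarrow> ereal" where
  "mp_det n A = Max ((\<lambda>\<sigma>. \<Sum>i<n. A i (\<sigma> i)) ` {\<sigma>. \<sigma> permutes {..<n}})"

definition del_idx :: "nat \<Rightarrow> nat \<Rightarrow> nat" where
  "del_idx i k = (if k < i then k else Suc k)"

definition minor :: "(nat \<Rightarrow> nat \<Rightarrow> ereal) \<Rightarrow> nat \<Rightarrow> nat \<Rightarrow> nat \<Rightarrow> nat \<Rightarrow> ereal" where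
  "minor A i j = (\<lambda>k l. A (del_idx i k) (del_idx j l))"

definition mp_adj :: "nat \<Rightarrow> (nat \<Rightarrow> nat \<Rightarrow> ereal) \<Rightarrow> nat \<Rightarrow> nat \<Rightarrow> ereal" where
  "mp_adj n A i j = mp_det (n - 1) (minor A j i)"

definition mp_pinv :: "nat \<Rightarrow> (nat \<Rightarrow> nat \<Rightarrow> ereal) \<Rightarrow> nat \<Rightarrow> nat \<Rightarrow> ereal" where
  "mp_pinv n A i j = mp_adj n A i j - mp_det n A"

definition mp_mult :: "nat \<Rightarrow> (nat \<Rightarrow> nat \<Rightarrow> ereal) \<Rightarrow> (nat \<Rightarrow> nat \<Rightarrow> ereal) \<Rightarrow> nat \<Rightarrow> nat \<Rightarrow> ereal" where
  "mp_mult n A C i j = Max ((\<lambda>k. A i k + C k j) ` {..<n})"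

definition mp_mulv :: "nat \<Rightarrow> (nat \<Rightarrow> nat \<Rightarrow> ereal) \<Rightarrow> (nat \<Rightarrow> ereal) \<Rightarrow> nat \<Rightarrow> ereal" where
  "mp_mulv n A X i = Max ((\<lambda>k. A i k + X k) ` {..<n})"

definition replace_col :: "(nat \<Rightarrow> nat \<Rightarrow> ereal) \<Rightarrow> (nat \<Rightarrow> ereal) \<Rightarrow> nat \<Rightarrow> nat \<Rightarrow> nat \<Rightarrow> ereal" where
  "replace_col A b j = (\<lambda>i k. if k = j then b i else A i k)"

definition mp_solution :: "nat \<Rightarrow> (nat \<Rightarrow> nat \<Rightarrow> ereal) \<Rightarrow> (nat \<Rightarrow> ereal) \<Rightarrow> (nat \<Rightarrow> ereal) \<Rightarrow> bool" where
  "mp_solution n A b X \<longleftrightarrow> (\<forall>k<n. X k \<noteq> \<infinity>) \<and> (\<forall>i<n. mp_mulv n A X i = b i)"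

definition mp_max_solution :: "nat \<Rightarrow> (nat \<Rightarrow> nat \<Rightarrow> ereal) \<Rightarrow> (nat \<Rightarrow> ereal) \<Rightarrow> (nat \<Rightarrow> ereal) \<Rightarrow> bool" where
  "mp_max_solution n A b X \<longleftrightarrow> mp_solution n A b X \<and>
     (\<forall>Y. mp_solution n A b Y \<longrightarrow> (\<forall>k<n. Y k \<le> X k))"

end

theory Submission
  imports Defs
begin

definition ins_idx :: "nat \<Rightarrow> nat \<Rightarrow> nat" where
  "ins_idx i l = (if l < i then l else l - 1)"

lemma del_ne: "del_idx i m \<noteq> i" by (simp add: del_idx_def)
lemma del_ne': "i \<noteq> del_idx i m" by (simp add: del_idx_def)
lemma minus_ni: "p \<noteq> \<infinity> \<Longrightarrow> p - ereal d \<noteq> \<infinity>" by (cases p) auto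
lemma del_ins: "l \<noteq> i \<Longrightarrow> del_idx i (ins_idx i l) = l" by (auto simp: del_idx_def ins_idx_def)
lemma ins_del: "ins_idx i (del_idx i m) = m" by (auto simp: del_idx_def ins_idx_def)
lemma del_lt: "m < n - 1 \<Longrightarrow> i < n \<Longrightarrow> del_idx i m < n" by (auto simp: del_idx_def)
lemma ins_lt: "l < n \<Longrightarrow> l \<noteq> i \<Longrightarrow> i < n \<Longrightarrow> ins_idx i l < n - 1" by (auto simp: ins_idx_def)
lemma del_inj: "del_idx i a = del_idx i b \<Longrightarrow> a = b" by (metis ins_del)
lemma ins_inj: "ins_idx i a = ins_idx i b \<Longrightarrow> a \<noteq> i \<Longrightarrow> b \<noteq> i \<Longrightarrow> a = b" by (metis del_ins)

lemma bij_del: "i < n \<Longrightarrow> bij_betw (del_idx i) {..<n-1} ({..<n}-{i})"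
proof (rule bij_betw_byWitness[where f'="ins_idx i"])
  assume i: "i < n"
  show "\<forall>a\<in>{..<n-1}. ins_idx i (del_idx i a) = a" by (simp add: ins_del)
  show "\<forall>a\<in>{..<n}-{i}. del_idx i (ins_idx i a) = a" by (simp add: del_ins)
  show "del_idx i ` {..<n-1} \<subseteq> {..<n}-{i}" using del_lt[OF _ i] del_ne by auto
  show "ins_idx i ` ({..<n}-{i}) \<subseteq> {..<n-1}" using ins_lt[OF _ _ i] by auto
qed

lemma perm_of_finite:
  assumes "finite S" "\<And>x. x \<notin> S \<Longrightarrow> p x = x" "inj_on p S" "p ` S \<subseteq> S"
  shows "p permutes S"
proof -
  have "p ` S = S" using endo_inj_surj assms by blast
  then have "bij_betw p S S" using assms by (simp add: bij_betw_def)
  then show ?thesis using assms bij_imp_permutes by blast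
qed

lemma det_ge: "\<sigma> permutes {..<n} \<Longrightarrow> (\<Sum>i<n. A i (\<sigma> i)) \<le> mp_det n A"
  unfolding mp_det_def by (rule Max_ge) (auto simp: finite_permutations)

lemma det_ex: "\<exists>\<sigma>. \<sigma> permutes {..<n} \<and> mp_det n A = (\<Sum>i<n. A i (\<sigma> i))"
proof -
  have "mp_det n A \<in> (\<lambda>\<sigma>. \<Sum>i<n. A i (\<sigma> i)) ` {\<sigma>. \<sigma> permutes {..<n}}"
    unfolding mp_det_def by (rule Max_in) (auto simp: finite_permutations intro: permutes_id)
  then show ?thesis by auto
qed

lemma sum_del: "j < n \<Longrightarrow> (\<Sum>m<n-1. f (del_idx j m)) = (\<Sum>l\<in>{..<n}-{j}. f l)"
  using sum.reindex_bij_betw[OF bij_del, of j n f] by simp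

lemma minor_le:
  assumes j: "j < n" and t: "\<tau> permutes {..<n}" and tj: "\<tau> j = k"
  shows "(\<Sum>l\<in>{..<n}-{j}. A l (\<tau> l)) \<le> mp_det (n-1) (minor A j k)"
proof -
  define \<rho> where "\<rho> m = (if m < n - 1 then ins_idx k (\<tau> (del_idx j m)) else m)" for m
  have tin: "\<And>l. l < n \<Longrightarrow> \<tau> l < n" using permutes_in_image[OF t] by simp
  have tinj: "\<And>a b. \<tau> a = \<tau> b \<Longrightarrow> a = b" using permutes_inj[OF t] by (simp add: inj_eq)
  have kn: "k < n" using tin[OF j] tj by simp
  have tne: "\<tau> (del_idx j m) \<noteq> k" for m
  proof
    assume "\<tau> (del_idx j m) = k"
    then have "\<tau> (del_idx j m) = \<tau> j" using tj by simp
    then have "del_idx j m = j" by (rule tinj)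
    then show False using del_ne by blast
  qed
  have rp: "\<rho> permutes {..<n-1}"
  proof (rule perm_of_finite)
    show "inj_on \<rho> {..<n - 1}"
    proof (rule inj_onI)
      fix a b assume "a \<in> {..<n-1}" "b \<in> {..<n-1}" "\<rho> a = \<rho> b"
      then have "ins_idx k (\<tau> (del_idx j a)) = ins_idx k (\<tau> (del_idx j b))" by (simp add: \<rho>_def)
      then have "\<tau> (del_idx j a) = \<tau> (del_idx j b)" by (rule ins_inj[OF _ tne tne])
      then have "del_idx j a = del_idx j b" by (rule tinj)
      then show "a = b" by (rule del_inj)
    qed
    show "\<rho> ` {..<n - 1} \<subseteq> {..<n - 1}"
    proof
      fix x assume "x \<in> \<rho> ` {..<n - 1}"
      then obtain m where m: "m < n - 1" and x: "x = \<rho> m" by auto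
      have "del_idx j m < n" by (rule del_lt[OF m j])
      then have "\<tau> (del_idx j m) < n" by (rule tin)
      then have "ins_idx k (\<tau> (del_idx j m)) < n - 1" by (rule ins_lt[OF _ tne kn])
      then show "x \<in> {..<n - 1}" using m x by (simp add: \<rho>_def)
    qed
  qed (auto simp: \<rho>_def)
  have "(\<Sum>l\<in>{..<n}-{j}. A l (\<tau> l)) = (\<Sum>m<n-1. A (del_idx j m) (\<tau> (del_idx j m)))"
    by (rule sum_del[OF j, of "\<lambda>l. A l (\<tau> l)", symmetric])
  also have "\<dots> = (\<Sum>m<n-1. minor A j k m (\<rho> m))"
  proof (rule sum.cong[OF refl])
    fix m assume "m \<in> {..<n-1}"
    then have "\<rho> m = ins_idx k (\<tau> (del_idx j m))" by (simp add: \<rho>_def)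
    then have "del_idx k (\<rho> m) = \<tau> (del_idx j m)" using del_ins[OF tne] by simp
    then show "A (del_idx j m) (\<tau> (del_idx j m)) = minor A j k m (\<rho> m)" by (simp add: minor_def)
  qed
  also have "\<dots> \<le> mp_det (n-1) (minor A j k)" using det_ge[OF rp] .
  finally show ?thesis .
qed

lemma minor_ex:
  assumes j: "j < n" and kn: "k < n"
  shows "\<exists>\<tau>. \<tau> permutes {..<n} \<and> \<tau> j = k \<and> mp_det (n-1) (minor A j k) = (\<Sum>l\<in>{..<n}-{j}. A l (\<tau> l))"
proof -
  obtain \<rho> where rp: "\<rho> permutes {..<n-1}" and rd: "mp_det (n-1) (minor A j k) = (\<Sum>m<n-1. minor A j k m (\<rho> m))"
    using det_ex by blast
  define \<tau> where "\<tau> l = (if l = j then k else if l < n then del_idx k (\<rho> (ins_idx j l)) else l)" for l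
  have rin: "\<And>m. m < n - 1 \<Longrightarrow> \<rho> m < n - 1" using permutes_in_image[OF rp] by simp
  have rinj: "\<And>a b. \<rho> a = \<rho> b \<Longrightarrow> a = b" using permutes_inj[OF rp] by (simp add: inj_eq)
  have tp: "\<tau> permutes {..<n}"
  proof (rule perm_of_finite)
    show "inj_on \<tau> {..<n}"
    proof (rule inj_onI)
      fix a b assume ab: "a \<in> {..<n}" "b \<in> {..<n}" "\<tau> a = \<tau> b"
      show "a = b"
      proof (cases "a = j"; cases "b = j")
        assume "a \<noteq> j" "b \<noteq> j"
        then have "del_idx k (\<rho> (ins_idx j a)) = del_idx k (\<rho> (ins_idx j b))" using ab by (simp add: \<tau>_def)
        then have "ins_idx j a = ins_idx j b" using del_inj rinj by blast
        then show ?thesis using ins_inj \<open>a \<noteq> j\<close> \<open>b \<noteq> j\<close> by blast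
      qed (use ab in \<open>auto simp: \<tau>_def del_ne del_ne' split: if_splits\<close>)
    qed
    show "\<tau> ` {..<n} \<subseteq> {..<n}"
      using ins_lt rin del_lt j kn by (auto simp: \<tau>_def)
  qed (use j in \<open>auto simp: \<tau>_def\<close>)
  have "(\<Sum>l\<in>{..<n}-{j}. A l (\<tau> l)) = (\<Sum>m<n-1. A (del_idx j m) (\<tau> (del_idx j m)))"
    using sum_del[OF j, of "\<lambda>l. A l (\<tau> l)"] by simp
  also have "\<dots> = (\<Sum>m<n-1. minor A j k m (\<rho> m))"
    by (rule sum.cong) (auto simp: minor_def \<tau>_def ins_del del_ne del_lt j)
  finally show ?thesis using tp rd by (auto simp: \<tau>_def)
qed


lemma sum_split: "j < (n::nat) \<Longrightarrow> (\<Sum>l<n. f l) = f j + (\<Sum>l\<in>{..<n}-{j}. f l)"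
  by (rule sum.remove) auto

lemma repl_sum:
  assumes j: "j < n" and t: "\<tau> permutes {..<n}" and tj: "\<tau> j = k"
  shows "(\<Sum>l<n. replace_col A b k l (\<tau> l)) = b j + (\<Sum>l\<in>{..<n}-{j}. A l (\<tau> l))"
proof -
  have tinj: "\<And>a b. \<tau> a = \<tau> b \<Longrightarrow> a = b" using permutes_inj[OF t] by (simp add: inj_eq)
  have "(\<Sum>l<n. replace_col A b k l (\<tau> l)) = replace_col A b k j (\<tau> j) + (\<Sum>l\<in>{..<n}-{j}. replace_col A b k l (\<tau> l))"
    by (rule sum_split[OF j])
  also have "(\<Sum>l\<in>{..<n}-{j}. replace_col A b k l (\<tau> l)) = (\<Sum>l\<in>{..<n}-{j}. A l (\<tau> l))"
  proof (rule sum.cong)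
    fix l assume "l \<in> {..<n}-{j}"
    then have "\<tau> l \<noteq> k" using tinj tj by blast
    then show "replace_col A b k l (\<tau> l) = A l (\<tau> l)" by (simp add: replace_col_def)
  qed simp
  finally show ?thesis using tj by (simp add: replace_col_def)
qed

lemma E1:
  assumes "j < n" "k < n"
  shows "b j + mp_det (n-1) (minor A j k) \<le> mp_det n (replace_col A b k)"
proof -
  obtain \<tau> where t: "\<tau> permutes {..<n}" "\<tau> j = k" and d: "mp_det (n-1) (minor A j k) = (\<Sum>l\<in>{..<n}-{j}. A l (\<tau> l))"
    using minor_ex assms by blast
  show ?thesis using repl_sum[OF assms(1) t, of A b] det_ge[OF t(1), of "replace_col A b k"] d by simp
qed

lemma E2:
  assumes "k < n"
  shows "\<exists>j<n. mp_det n (replace_col A b k) \<le> b j + mp_det (n-1) (minor A j k)"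
proof -
  obtain \<tau> where t: "\<tau> permutes {..<n}" and d: "mp_det n (replace_col A b k) = (\<Sum>l<n. replace_col A b k l (\<tau> l))"
    using det_ex by blast
  define j where "j = inv \<tau> k"
  have tj: "\<tau> j = k" using t by (simp add: j_def permutes_inverses(1))
  have jn: "j < n" using permutes_in_image[OF permutes_inv[OF t]] assms unfolding j_def by simp
  have "mp_det n (replace_col A b k) = b j + (\<Sum>l\<in>{..<n}-{j}. A l (\<tau> l))"
    using d repl_sum[OF jn t tj] by simp
  also have "\<dots> \<le> b j + mp_det (n-1) (minor A j k)"
    by (rule add_left_mono) (rule minor_le[OF jn t tj])
  finally show ?thesis using jn by blast
qed

lemma det_not_inf:
  assumes "\<forall>i<n. \<forall>j<n. M i j \<noteq> \<infinity>"
  shows "mp_det n M \<noteq> \<infinity>"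
proof -
  obtain \<tau> where t: "\<tau> permutes {..<n}" and d: "mp_det n M = (\<Sum>l<n. M l (\<tau> l))"
    using det_ex by blast
  have "\<And>l. l < n \<Longrightarrow> \<tau> l < n" using permutes_in_image[OF t] by simp
  then show ?thesis using d assms by (auto simp: sum_Pinfty)
qed

lemma h1: "x + (p - ereal d) \<le> ereal bi \<Longrightarrow> ereal bj + c \<le> p \<Longrightarrow> p \<noteq> \<infinity> \<Longrightarrow> x \<noteq> \<infinity>
   \<Longrightarrow> x + (c - ereal d) \<le> ereal bi - ereal bj"
  by (cases x; cases p; cases c) auto

lemma h2: "p \<le> ereal bj + c \<Longrightarrow> x + (c - ereal d) \<le> ereal bi - ereal bj \<Longrightarrow> p \<noteq> \<infinity> \<Longrightarrow> x \<noteq> \<infinity>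
   \<Longrightarrow> c \<noteq> \<infinity> \<Longrightarrow> x + (p - ereal d) \<le> ereal bi"
  by (cases x; cases p; cases c) auto

lemma h3: "ereal d = a + s \<Longrightarrow> ereal bi + s \<le> p \<Longrightarrow> a \<noteq> \<infinity> \<Longrightarrow> s \<noteq> \<infinity> \<Longrightarrow> p \<noteq> \<infinity>
   \<Longrightarrow> ereal bi \<le> a + (p - ereal d)"
  by (cases a; cases s; cases p) auto

lemma h4: "ereal d = a + s \<Longrightarrow> ereal bi + s \<le> p \<Longrightarrow> a + y \<le> ereal bi \<Longrightarrow> y \<noteq> \<infinity>
   \<Longrightarrow> a \<noteq> \<infinity> \<Longrightarrow> s \<noteq> \<infinity> \<Longrightarrow> p \<noteq> \<infinity> \<Longrightarrow> y \<le> p - ereal d"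
  by (cases a; cases s; cases p; cases y) auto

theorem theorem4p8:
  fixes n :: nat and A :: "nat \<Rightarrow> nat \<Rightarrow> ereal" and b :: "nat \<Rightarrow> ereal"
  assumes A_S: "\<forall>i<n. \<forall>j<n. A i j \<noteq> \<infinity>"
    and b_reg: "\<forall>i<n. b i \<noteq> \<infinity> \<and> b i \<noteq> -\<infinity>"
    and d_unit: "mp_det n A \<noteq> -\<infinity>"
  shows "mp_max_solution n A b (\<lambda>j. mp_det n (replace_col A b j) - mp_det n A)
     \<longleftrightarrow> (\<forall>i<n. \<forall>j<n. mp_mult n A (mp_pinv n A) i j \<le> b i - b j)"
proof -
  define P where "P k = mp_det n (replace_col A b k)" for k
  define C where "C j k = mp_det (n-1) (minor A j k)" for j k
  have Dni: "mp_det n A \<noteq> \<infinity>" using det_not_inf A_S by blast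
  then obtain d where D: "mp_det n A = ereal d" using d_unit by (cases "mp_det n A") auto
  obtain \<sigma> where sp: "\<sigma> permutes {..<n}" and sd: "mp_det n A = (\<Sum>l<n. A l (\<sigma> l))"
    using det_ex by blast
  have sin: "\<And>l. l < n \<Longrightarrow> \<sigma> l < n" using permutes_in_image[OF sp] by simp
  have Ani: "\<And>i k. i < n \<Longrightarrow> k < n \<Longrightarrow> A i k \<noteq> \<infinity>" using A_S by blast
  have Pni: "\<And>k. k < n \<Longrightarrow> P k \<noteq> \<infinity>"
    unfolding P_def by (rule det_not_inf) (use A_S b_reg in \<open>auto simp: replace_col_def\<close>)
  have breal: "\<And>i. i < n \<Longrightarrow> \<exists>r. b i = ereal r" using b_reg by (metis ereal_cases)
  have Cni: "\<And>j k. j < n \<Longrightarrow> k < n \<Longrightarrow> C j k \<noteq> \<infinity>"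
  proof -
    fix j k assume "j < n" "k < n"
    then have "b j + C j k \<le> P k" unfolding C_def P_def by (rule E1)
    then show "C j k \<noteq> \<infinity>" using Pni[OF \<open>k < n\<close>] b_reg \<open>j < n\<close> by auto
  qed
  define S' where "S' i = (\<Sum>l\<in>{..<n}-{i}. A l (\<sigma> l))" for i
  have S'ni: "\<And>i. S' i \<noteq> \<infinity>" unfolding S'_def using A_S sin by (auto simp: sum_Pinfty)
  have DS: "ereal d = A i (\<sigma> i) + S' i" if i: "i < n" for i
    unfolding D[symmetric] sd S'_def by (rule sum_split[OF i])
  have E3: "b i + S' i \<le> P (\<sigma> i)" if i: "i < n" for i
    using repl_sum[OF i sp refl, of A b] det_ge[OF sp, of "replace_col A b (\<sigma> i)"]
    unfolding P_def S'_def by simp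
  have mult_eq: "\<And>i j. mp_mult n A (mp_pinv n A) i j = Max ((\<lambda>k. A i k + (C j k - ereal d)) ` {..<n})"
    by (simp add: mp_mult_def mp_pinv_def mp_adj_def C_def D)
  have mulv_eq: "\<And>i. mp_mulv n A (\<lambda>j. P j - mp_det n A) i = Max ((\<lambda>k. A i k + (P k - ereal d)) ` {..<n})"
    by (simp add: mp_mulv_def D)
  have Pfun: "(\<lambda>j. mp_det n (replace_col A b j) - mp_det n A) = (\<lambda>j. P j - mp_det n A)"
    by (simp add: P_def)
  show ?thesis unfolding Pfun
  proof
    assume ms: "mp_max_solution n A b (\<lambda>j. P j - mp_det n A)"
    have sol: "Max ((\<lambda>k. A i k + (P k - ereal d)) ` {..<n}) = b i" if i: "i < n" for i
    proof -
      have "mp_mulv n A (\<lambda>j. P j - mp_det n A) i = b i"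
        using ms i unfolding mp_max_solution_def mp_solution_def by blast
      then show ?thesis by (simp add: mulv_eq)
    qed
    show "\<forall>i<n. \<forall>j<n. mp_mult n A (mp_pinv n A) i j \<le> b i - b j"
    proof (intro allI impI)
      fix i j assume i: "i < n" and j: "j < n"
      obtain bi where bi: "b i = ereal bi" using breal i by blast
      obtain bj where bj: "b j = ereal bj" using breal j by blast
      have "A i k + (C j k - ereal d) \<le> b i - b j" if k: "k < n" for k
      proof -
        have "A i k + (P k - ereal d) \<le> Max ((\<lambda>k. A i k + (P k - ereal d)) ` {..<n})"
          using k by (intro Max_ge) auto
        then have 1: "A i k + (P k - ereal d) \<le> ereal bi" using sol[OF i] bi by simp
        have 2: "ereal bj + C j k \<le> P k" unfolding C_def P_def bj[symmetric] using E1 j k by blast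
        show ?thesis unfolding bi bj by (rule h1[OF 1 2 Pni[OF k] Ani[OF i k]])
      qed
      then show "mp_mult n A (mp_pinv n A) i j \<le> b i - b j" unfolding mult_eq using i
        by (subst Max_le_iff) auto
    qed
  next
    assume cond: "\<forall>i<n. \<forall>j<n. mp_mult n A (mp_pinv n A) i j \<le> b i - b j"
    have cond': "A i k + (C j k - ereal d) \<le> b i - b j" if "i < n" "j < n" "k < n" for i j k
    proof -
      have "A i k + (C j k - ereal d) \<le> Max ((\<lambda>k. A i k + (C j k - ereal d)) ` {..<n})"
        using that by (intro Max_ge) auto
      also have "\<dots> \<le> b i - b j" using cond that unfolding mult_eq by blast
      finally show ?thesis .
    qed
    have solv: "Max ((\<lambda>k. A i k + (P k - ereal d)) ` {..<n}) = b i" if i: "i < n" for i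
    proof (rule antisym)
      obtain bi where bi: "b i = ereal bi" using breal i by blast
      have "A i k + (P k - ereal d) \<le> b i" if k: "k < n" for k
      proof -
        obtain j where j: "j < n" and pj: "P k \<le> b j + C j k" using E2 k unfolding P_def C_def by blast
        obtain bj where bj: "b j = ereal bj" using breal j by blast
        have 1: "P k \<le> ereal bj + C j k" using pj bj by simp
        have 2: "A i k + (C j k - ereal d) \<le> ereal bi - ereal bj" using cond'[OF i j k] bi bj by simp
        show ?thesis unfolding bi by (rule h2[OF 1 2 Pni[OF k] Ani[OF i k] Cni[OF j k]])
      qed
      then show "Max ((\<lambda>k. A i k + (P k - ereal d)) ` {..<n}) \<le> b i" using i
        by (subst Max_le_iff) auto
      have 3: "ereal bi + S' i \<le> P (\<sigma> i)" using E3[OF i] bi by simp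
      have "b i \<le> A i (\<sigma> i) + (P (\<sigma> i) - ereal d)"
        unfolding bi by (rule h3[OF DS[OF i] 3 Ani[OF i sin[OF i]] S'ni Pni[OF sin[OF i]]])
      also have "\<dots> \<le> Max ((\<lambda>k. A i k + (P k - ereal d)) ` {..<n})"
        using sin[OF i] by (intro Max_ge) auto
      finally show "b i \<le> Max ((\<lambda>k. A i k + (P k - ereal d)) ` {..<n})" .
    qed
    have issol: "mp_solution n A b (\<lambda>j. P j - mp_det n A)"
      unfolding mp_solution_def using solv mulv_eq Pni D minus_ni by auto
    have maxi: "Y k \<le> P k - mp_det n A" if Y: "mp_solution n A b Y" and k: "k < n" for Y k
    proof -
      define i where "i = inv \<sigma> k"
      have si: "\<sigma> i = k" using sp by (simp add: i_def permutes_inverses(1))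
      have i: "i < n" using permutes_in_image[OF permutes_inv[OF sp]] k unfolding i_def by simp
      obtain bi where bi: "b i = ereal bi" using breal i by blast
      have "A i k + Y k \<le> Max ((\<lambda>k. A i k + Y k) ` {..<n})" using k by (intro Max_ge) auto
      also have "\<dots> = b i" using Y i unfolding mp_solution_def mp_mulv_def by blast
      finally have 1: "A (i) (\<sigma> i) + Y k \<le> ereal bi" using bi si by simp
      have 3: "ereal bi + S' i \<le> P (\<sigma> i)" using E3[OF i] bi by simp
      have Yk: "Y k \<noteq> \<infinity>" using Y k unfolding mp_solution_def by blast
      have "Y k \<le> P (\<sigma> i) - ereal d"
        by (rule h4[OF DS[OF i] 3 1 Yk Ani[OF i sin[OF i]] S'ni Pni[OF sin[OF i]]])
      then show ?thesis using si D by simp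
    qed
    show "mp_max_solution n A b (\<lambda>j. P j - mp_det n A)"
      unfolding mp_max_solution_def using issol maxi by auto
  qed
qed

end
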